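(* Let $a:\mathbb{R}^{4d}\to\mathbb{R}^d$, $a=a(x,y,\xi,\eta)$, have components in $BC^\infty(\mathbb{R}^{4d})$ and suppose there is $\delta\in[0,1)$ with $\|(\nabla_ya)(x,y,\xi,\eta)\|\le\delta$ for all $(x,y,\xi,\eta)$. Then: (1) for each $(x,\xi,\eta)$ the map $y\mapsto y+a(x,y,\xi,\eta)$ is a $C^\infty$-diffeomorphism of $\mathbb{R}^d$; (2) if $g(x,z,\xi,\eta)$ denotes its inverse (in $z$) and $D(x,z,\xi,\eta)$ the Jacobian determinant of $z\mapsto g(x,z,\xi,\eta)$, then $g(x,z,\xi,\eta)-z$ and $D$ belong to $BC^\infty(\mathbb{R}^{4d})$; (3) if moreover for some $\epsilon>0$, on $\mathcal M_\epsilon:=\{(x,y,\xi,\eta)\in\mathbb{R}^{4d}:|\eta|\le\epsilon|\xi|\}$ one has $|\partial^\alpha_{(x,y)}\partial^\beta_{(\xi,\eta)}a(x,y,\xi,\eta)|\le C_{\alpha\beta}\langle\xi\rangle^{-|\beta|}$ for all $(\alpha,\beta)\in\mathbb{N}^{2d}\times\mathbb{N}^{2d}$, then $g(x,z,\xi,\eta)-z$ and $D(x,z,\xi,\eta)$ satisfy similar inequalities for $(x,z,\xi,\eta)\in\mathcal M_\epsilon$.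
   Context: $\langle\xi\rangle=(1+|\xi|^2)^{1/2}$; $BC^\infty$ denotes smooth functions bounded together with all their derivatives; $\nabla_ya$ is the $d\times d$ matrix of partial derivatives of $a$ with respect to $y$, $\|\cdot\|$ the operator norm. *)

theory Defs
  imports "HOL-Analysis.Analysis"
begin

text \<open>Points of R^{4d} are represented as ((x,y),(xi,eta)) with x,y,xi,eta in R^d = real^'n.\<close>
type_synonym 'n pt = "((real^'n) \<times> (real^'n)) \<times> ((real^'n) \<times> (real^'n))"

fun dd :: "'a::real_normed_vector list \<Rightarrow> ('a \<Rightarrow> real) \<Rightarrow> 'a \<Rightarrow> real" where
  "dd [] f = f"
| "dd (v # vs) f = (\<lambda>x. frechet_derivative (dd vs f) (at x) v)"

definition BC_inf :: "('a::euclidean_space \<Rightarrow> real) \<Rightarrow> bool" where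
  "BC_inf f \<longleftrightarrow> (\<forall>vs. set vs \<subseteq> Basis \<longrightarrow>
      (\<forall>x. dd vs f differentiable (at x)) \<and> bounded (range (dd vs f)))"

definition smooth_map :: "('a::euclidean_space \<Rightarrow> 'b::euclidean_space) \<Rightarrow> bool" where
  "smooth_map f \<longleftrightarrow> (\<forall>vs. set vs \<subseteq> Basis \<longrightarrow> (\<forall>b\<in>Basis. \<forall>x.
      dd vs (\<lambda>y. f y \<bullet> b) differentiable (at x)))"

definition diffeo :: "('a::euclidean_space \<Rightarrow> 'a) \<Rightarrow> bool" where
  "diffeo f \<longleftrightarrow> bij f \<and> smooth_map f \<and> smooth_map (inv f)"

definition jbr :: "real^'n::finite \<Rightarrow> real" where
  "jbr \<xi> = sqrt (1 + (norm \<xi>)\<^sup>2)"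

definition Mset :: "real \<Rightarrow> 'n::finite pt set" where
  "Mset \<epsilon> = {p. norm (snd (snd p)) \<le> \<epsilon> * norm (fst (snd p))}"

text \<open>Symbol-type estimates on M_eps: for each multi-index (list of basis directions),
  |d^alpha_(x,y) d^beta_(xi,eta) f| <= C * <xi>^(-|beta|), where |beta| counts the
  directions lying in the (xi,eta) factor.\<close>
definition symbol_est :: "real \<Rightarrow> ('n::finite pt \<Rightarrow> real) \<Rightarrow> bool" where
  "symbol_est \<epsilon> f \<longleftrightarrow> (\<forall>vs. set vs \<subseteq> Basis \<longrightarrow> (\<exists>C. \<forall>p\<in>Mset \<epsilon>.
      \<bar>dd vs f p\<bar> \<le> C / jbr (fst (snd p)) ^ length (filter (\<lambda>v. fst v = 0) vs)))"

definition gmap :: "('n::finite pt \<Rightarrow> real^'n) \<Rightarrow> 'n pt \<Rightarrow> real^'n" where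
  "gmap a p = inv (\<lambda>y. y + a ((fst (fst p), y), snd p)) (snd (fst p))"

definition Dmap :: "('n::finite pt \<Rightarrow> real^'n) \<Rightarrow> 'n pt \<Rightarrow> real" where
  "Dmap a p = det (jacobian (\<lambda>z. gmap a ((fst (fst p), z), snd p)) (at (snd (fst p))))"

end

theory Submission
  imports Defs
begin



definition ey :: "real^'n::finite \<Rightarrow> 'n pt" where "ey u = ((0,u),(0,0))"
definition Yp :: "'n::finite pt \<Rightarrow> real^'n" where "Yp p = snd (fst p)"
definition Pp :: "'n::finite pt \<Rightarrow> 'n pt" where "Pp v = ((fst (fst v), 0), snd v)"
definition emb :: "'n::finite pt \<Rightarrow> real^'n \<Rightarrow> 'n pt" where "emb p y = ((fst (fst p), y), snd p)"

lemma basis_pt_cases: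
  assumes "v \<in> (Basis :: 'n::finite pt set)"
  shows "(Pp v = v \<and> Yp v = 0) \<or> (Pp v = 0 \<and> v = ey (Yp v) \<and> Yp v \<in> Basis)"
  using assms by (auto simp: Basis_prod_def Pp_def Yp_def ey_def zero_prod_def)

lemma ey_basis: "b \<in> Basis \<Longrightarrow> ey b \<in> (Basis :: 'n::finite pt set)"
  unfolding ey_def Basis_prod_def by (rule UnI1, rule image_eqI[where x="(0,b)"]) (auto simp: zero_prod_def)

lemma ey_not_xi: "fst (ey b) \<noteq> 0 \<longleftrightarrow> b \<noteq> 0"
  by (auto simp: ey_def zero_prod_def)

lemma linear_ey: "linear ey" by (auto simp: linear_iff ey_def)
lemma linear_Yp: "linear Yp" by (auto simp: linear_iff Yp_def)
lemma linear_Pp: "linear Pp" by (auto simp: linear_iff Pp_def)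

lemma emb_deriv: "(emb p has_derivative ey) (at y)"
proof -
  have "emb p = (\<lambda>y. ((fst (fst p), 0), snd p) + ey y)"
    by (auto simp: emb_def ey_def prod_eq_iff)
  moreover have bl: "bounded_linear ey" using linear_ey linear_conv_bounded_linear by blast
  have "((\<lambda>y. ((fst (fst p), 0), snd p) + ey y) has_derivative ey) (at y)"
    by (rule has_derivative_eq_rhs, rule has_derivative_add[OF has_derivative_const bounded_linear.has_derivative[OF bl has_derivative_ident]]) auto
  ultimately show ?thesis by simp
qed

lemma Yp_deriv: "(Yp has_derivative Yp) (at y)"
  using linear_Yp bounded_linear_imp_has_derivative linear_conv_bounded_linear by blast

definition smooth :: "('a::euclidean_space \<Rightarrow> real) \<Rightarrow> bool" where
  "smooth f \<longleftrightarrow> (\<forall>vs. set vs \<subseteq> Basis \<longrightarrow> (\<forall>x. dd vs f differentiable (at x)))"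

lemma dd_add:
  assumes "smooth f" "smooth g" "set vs \<subseteq> Basis"
  shows "dd vs (\<lambda>x. f x + g x) = (\<lambda>x. dd vs f x + dd vs g x)"
  using assms(3)
proof (induction vs)
  case Nil then show ?case by simp
next
  case (Cons v vs)
  then have IH: "dd vs (\<lambda>x. f x + g x) = (\<lambda>x. dd vs f x + dd vs g x)" by simp
  show ?case
  proof
    fix x
    have df: "(dd vs f has_derivative frechet_derivative (dd vs f) (at x)) (at x)"
      using assms(1) Cons.prems frechet_derivative_works unfolding smooth_def by (metis insert_subset list.simps(15))
    have dg: "(dd vs g has_derivative frechet_derivative (dd vs g) (at x)) (at x)"
      using assms(2) Cons.prems frechet_derivative_works unfolding smooth_def by (metis insert_subset list.simps(15))
    have "((\<lambda>x. dd vs f x + dd vs g x) has_derivative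
        (\<lambda>h. frechet_derivative (dd vs f) (at x) h + frechet_derivative (dd vs g) (at x) h)) (at x)"
      using df dg by (rule has_derivative_add)
    note frechet_derivative_at[OF this, symmetric]
    then show "dd (v # vs) (\<lambda>x. f x + g x) x = dd (v # vs) f x + dd (v # vs) g x"
      by (simp add: IH)
  qed
qed

lemma smooth_add: assumes "smooth f" "smooth g" shows "smooth (\<lambda>x. f x + g x)"
  unfolding smooth_def
proof (intro allI impI)
  fix vs :: "'a list" and x assume vs: "set vs \<subseteq> Basis"
  show "dd vs (\<lambda>x. f x + g x) differentiable at x"
    using assms vs by (simp add: dd_add smooth_def differentiable_add)
qed

lemma dd_lin: "dd vs (\<lambda>y. y \<bullet> b) = (case vs of [] \<Rightarrow> (\<lambda>y. y \<bullet> b) | [v] \<Rightarrow> (\<lambda>_. v \<bullet> b) | _ \<Rightarrow> (\<lambda>_. 0))"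
proof (induction vs)
  case Nil then show ?case by simp
next
  case (Cons v vs)
  show ?case
  proof (cases vs)
    case Nil
    have "((\<lambda>y. y \<bullet> b) has_derivative (\<lambda>y. y \<bullet> b)) (at x)" for x
      by (intro derivative_eq_intros) auto
    then have "frechet_derivative (\<lambda>y. y \<bullet> b) (at x) = (\<lambda>y. y \<bullet> b)" for x
      using frechet_derivative_at by metis
    then show ?thesis using Nil by simp
  next
    case (Cons w ws)
    have "((\<lambda>_. c) has_derivative (\<lambda>y. 0)) (at x)" for x c
      by (intro derivative_eq_intros) auto
    then have fc: "frechet_derivative (\<lambda>_. c) (at x) = (\<lambda>y. 0)" for x c
      using frechet_derivative_at by metis
    obtain c where "dd vs (\<lambda>y. y \<bullet> b) = (\<lambda>_. c)"
      using Cons.IH Cons by (cases ws) auto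
    then show ?thesis using Cons fc by simp
  qed
qed

lemma smooth_lin: "smooth (\<lambda>y. y \<bullet> b)"
  unfolding smooth_def
proof (intro allI impI)
  fix vs :: "'a list" and x
  show "dd vs (\<lambda>y. y \<bullet> b) differentiable at x"
    by (auto simp: dd_lin split: list.split)
qed

lemma dd_emb:
  fixes h :: "'n::finite pt \<Rightarrow> real"
  assumes "smooth h" "set vs \<subseteq> Basis"
  shows "dd vs (\<lambda>y. h (emb p y)) = (\<lambda>y. dd (map ey vs) h (emb p y))"
  using assms(2)
proof (induction vs)
  case Nil then show ?case by simp
next
  case (Cons v vs)
  then have IH: "dd vs (\<lambda>y. h (emb p y)) = (\<lambda>y. dd (map ey vs) h (emb p y))" by simp
  have "set vs \<subseteq> Basis" using Cons.prems by simp
  then have sub: "set (map ey vs) \<subseteq> Basis" by (simp only: set_map) (blast intro: ey_basis)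
  show ?case
  proof
    fix y
    have d: "(dd (map ey vs) h has_derivative frechet_derivative (dd (map ey vs) h) (at (emb p y))) (at (emb p y))"
      using assms(1) sub frechet_derivative_works unfolding smooth_def by blast
    have "((\<lambda>y. dd (map ey vs) h (emb p y)) has_derivative (frechet_derivative (dd (map ey vs) h) (at (emb p y)) \<circ> ey)) (at y)"
      using diff_chain_at[OF emb_deriv d] by (simp add: o_def)
    note frechet_derivative_at[OF this, symmetric]
    then show "dd (v # vs) (\<lambda>y. h (emb p y)) y = dd (map ey (v # vs)) h (emb p y)"
      by (simp add: IH)
  qed
qed

lemma smooth_emb: "smooth (h :: 'n::finite pt \<Rightarrow> real) \<Longrightarrow> smooth (\<lambda>y. h (emb p y))"
proof -
  assume h: "smooth h"
  show ?thesis unfolding smooth_def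
  proof (intro allI impI)
    fix vs :: "(real^'n) list" and y assume vs: "set vs \<subseteq> Basis"
    have sub: "set (map ey vs) \<subseteq> Basis" using vs by (simp only: set_map) (blast intro: ey_basis)
    have d: "dd (map ey vs) h differentiable (at (emb p y))"
      using h sub unfolding smooth_def by blast
    have "(\<lambda>y. dd (map ey vs) h (emb p y)) differentiable (at y)"
    proof -
      obtain D where "(dd (map ey vs) h has_derivative D) (at (emb p y))"
        using d unfolding differentiable_def by blast
      from diff_chain_at[OF emb_deriv this] show ?thesis
        unfolding differentiable_def o_def by blast
    qed
    then show "dd vs (\<lambda>y. h (emb p y)) differentiable at y"
      by (subst dd_emb[OF h vs])
  qed
qed

lemma smooth_mapI:
  assumes "\<And>b. b \<in> Basis \<Longrightarrow> smooth (\<lambda>y. f y \<bullet> b)"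
  shows "smooth_map f"
  using assms unfolding smooth_map_def smooth_def by blast




lemma inv_matrix:
  fixes A :: "real^'n^'n"
  assumes "invertible A"
  shows "A ** matrix_inv A = mat 1" "matrix_inv A ** A = mat 1"
  using someI_ex[OF assms[unfolded invertible_def]] unfolding matrix_inv_def by auto

locale lem =
  fixes a :: "'n::finite pt \<Rightarrow> real^'n" and \<delta> :: real
  assumes bc: "\<And>j. BC_inf (\<lambda>p. a p $ j)"
    and d0: "0 \<le> \<delta>" and d1: "\<delta> < 1"
    and grad: "\<And>x y \<xi> \<eta>. onorm (frechet_derivative (\<lambda>y'. a ((x, y'), (\<xi>, \<eta>))) (at y)) \<le> \<delta>"
begin

definition A' :: "'n pt \<Rightarrow> 'n pt \<Rightarrow> real^'n" where "A' q = frechet_derivative a (at q)"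

lemma a_smooth: "smooth (\<lambda>p. a p $ j)"
  using bc unfolding BC_inf_def smooth_def by blast

lemma a_comp_diff: "(\<lambda>p. a p $ j) differentiable (at q)"
  using a_smooth[of j] unfolding smooth_def by (metis dd.simps(1) empty_subsetI list.set(1))

lemma a_diff: "a differentiable (at q)"
proof -
  have "\<forall>i\<in>Basis. (\<lambda>x. a x \<bullet> i) differentiable at q"
  proof
    fix i :: "real^'n" assume "i \<in> Basis"
    then obtain k where "i = axis k 1" by (auto simp: Basis_vec_def)
    then show "(\<lambda>x. a x \<bullet> i) differentiable at q"
      using a_comp_diff[of k q] by (simp add: cart_eq_inner_axis[symmetric])
  qed
  then show ?thesis using differentiable_componentwise_within by blast
qed

lemma a_has_deriv: "(a has_derivative A' q) (at q)"
  unfolding A'_def using a_diff frechet_derivative_works by blast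

lemma A'_linear: "linear (A' q)"
  using a_has_deriv has_derivative_linear by blast

lemma A'_comp: "A' q u $ l = dd [u] (\<lambda>p. a p $ l) q"
proof -
  have "((\<lambda>p. a p $ l) has_derivative (\<lambda>u. A' q u $ l)) (at q)"
    using bounded_linear.has_derivative[OF bounded_linear_vec_nth a_has_deriv] .
  from fun_cong[OF frechet_derivative_at[OF this], of u] show ?thesis by simp
qed

lemma slice_has_deriv: "((\<lambda>y. a (emb p y)) has_derivative (\<lambda>u. A' (emb p y) (ey u))) (at y)"
  using diff_chain_at[OF emb_deriv a_has_deriv] by (simp add: o_def)

lemma onorm_slice: "onorm (\<lambda>u. A' (emb p y) (ey u)) \<le> \<delta>"
proof -
  have "frechet_derivative (\<lambda>y. a (emb p y)) (at y) = (\<lambda>u. A' (emb p y) (ey u))"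
    using frechet_derivative_at[OF slice_has_deriv] by simp
  moreover have "(\<lambda>y. a (emb p y)) = (\<lambda>y'. a ((fst (fst p), y'), (fst (snd p), snd (snd p))))"
    by (simp add: emb_def)
  ultimately show ?thesis using grad by metis
qed

lemma emb_self: "emb q (Yp q) = q" by (simp add: emb_def Yp_def)
lemma emb_emb: "emb (emb p y) = emb p" by (auto simp: emb_def fun_eq_iff)
lemma Yp_emb: "Yp (emb p y) = y" by (simp add: emb_def Yp_def)

lemma onorm_q: "onorm (\<lambda>u. A' q (ey u)) \<le> \<delta>"
  using onorm_slice[of q "Yp q"] by (simp add: emb_self)

lemma bl_Aey: "bounded_linear (\<lambda>u. A' q (ey u))"
  using slice_has_deriv[of q "Yp q"] emb_self[of q] has_derivative_bounded_linear by fastforce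

lemma Aey_bound: "norm (A' q (ey u)) \<le> \<delta> * norm u"
  using onorm[OF bl_Aey, of q u] onorm_q[of q] by (meson mult_right_mono norm_ge_zero order_trans)

lemma lip: "norm (a (emb p y1) - a (emb p y2)) \<le> \<delta> * norm (y1 - y2)"
proof -
  have "\<And>y. y \<in> UNIV \<Longrightarrow> ((\<lambda>y. a (emb p y)) has_derivative (\<lambda>u. A' (emb p y) (ey u))) (at y within UNIV)"
    using slice_has_deriv by simp
  from differentiable_bound[OF convex_UNIV this onorm_slice] show ?thesis by simp
qed

definition fsl :: "'n pt \<Rightarrow> real^'n \<Rightarrow> real^'n" where "fsl p y = y + a (emb p y)"

lemma fsl_fun: "fsl p = (\<lambda>y. y + a (emb p y))" by (simp add: fsl_def fun_eq_iff)

lemma fsl_ex1: "\<exists>!y. fsl p y = z"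
proof -
  have "\<exists>!y. z - a (emb p y) = y"
  proof (rule banach_fix_type[OF d0 d1], intro allI)
    fix y1 y2
    have "dist (z - a (emb p y1)) (z - a (emb p y2)) = norm (a (emb p y1) - a (emb p y2))"
      by (simp add: dist_norm norm_minus_commute)
    also have "\<dots> \<le> \<delta> * dist y1 y2" using lip by (simp add: dist_norm)
    finally show "dist (z - a (emb p y1)) (z - a (emb p y2)) \<le> \<delta> * dist y1 y2" .
  qed
  moreover have "\<And>y. (z - a (emb p y) = y) = (fsl p y = z)"
    by (auto simp: fsl_def algebra_simps)
  ultimately show ?thesis by simp
qed

lemma fsl_bij: "bij (fsl p)"
  unfolding bij_def inj_def surj_def using fsl_ex1 by metis

lemma fsl_emb: "fsl (emb p y) = fsl p" by (simp add: fsl_def emb_emb fun_eq_iff)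

definition G :: "'n pt \<Rightarrow> 'n pt" where "G p = emb p (gmap a p)"
definition Phi :: "'n pt \<Rightarrow> 'n pt" where "Phi q = q + ey (a q)"

lemma gmap_eq: "gmap a p = inv (fsl p) (Yp p)"
  by (simp add: gmap_def fsl_fun emb_def Yp_def)

lemma fsl_gmap: "fsl p (gmap a p) = Yp p"
  using surj_f_inv_f[OF bij_is_surj[OF fsl_bij[of p]]] by (simp add: gmap_eq)

lemma Phi_G: "Phi (G p) = p"
proof -
  have "Phi (G p) = emb p (fsl p (gmap a p))"
    by (simp add: Phi_def G_def fsl_def emb_def ey_def prod_eq_iff)
  then show ?thesis by (simp add: fsl_gmap emb_self)
qed

lemma G_Phi: "G (Phi q) = q"
proof -
  have e: "emb (Phi q) = emb q" by (auto simp: Phi_def emb_def ey_def fun_eq_iff zero_prod_def)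
  have f: "fsl (Phi q) = fsl q" by (simp add: fsl_def e fun_eq_iff)
  have y: "Yp (Phi q) = fsl q (Yp q)" by (simp add: Phi_def Yp_def ey_def fsl_def emb_self[unfolded Yp_def])
  have "gmap a (Phi q) = Yp q"
    unfolding gmap_eq f y using fsl_bij[of q] by (simp add: bij_is_inj)
  then show ?thesis by (simp add: G_def e emb_self)
qed

lemma G_snd: "snd (G p) = snd p" by (simp add: G_def emb_def)

lemma Yp_G_add: "gmap a p + a (G p) = Yp p"
  using fsl_gmap[of p] by (simp add: fsl_def G_def)

end



context lem begin

definition Mm :: "'n pt \<Rightarrow> real^'n^'n" where "Mm q = mat 1 + matrix (\<lambda>u. A' q (ey u))"
definition mi :: "'n pt \<Rightarrow> real^'n^'n" where "mi q = matrix_inv (Mm q)"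

lemma Mm_mul: "Mm q *v u = u + A' q (ey u)"
  using bl_Aey[of q] by (simp add: Mm_def matrix_vector_mult_add_rdistrib)

lemma Mm_lower: "(1 - \<delta>) * norm u \<le> norm (Mm q *v u)"
proof -
  have "norm u \<le> norm (Mm q *v u) + norm (A' q (ey u))"
    by (metis Mm_mul add_diff_cancel_right' norm_triangle_ineq4 )
  then show ?thesis using Aey_bound[of q u] by (simp add: algebra_simps)
qed

lemma Mm_inv: "invertible (Mm q)"
proof -
  have "\<forall>x. Mm q *v x = 0 \<longrightarrow> x = 0"
  proof (intro allI impI)
    fix x assume "Mm q *v x = 0"
    then have "(1 - \<delta>) * norm x \<le> 0" using Mm_lower[of x q] by simp
    then show "x = 0" using d1 by (simp add: mult_le_0_iff)
  qed
  then show ?thesis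
    unfolding invertible_left_inverse matrix_left_invertible_ker by blast
qed

lemma Mm_mi: "Mm q ** mi q = mat 1" "mi q ** Mm q = mat 1"
  using inv_matrix[OF Mm_inv] unfolding mi_def by auto

lemma Mm_mi_v: "Mm q *v (mi q *v w) = w"
  by (simp add: matrix_vector_mul_assoc Mm_mi)

lemma mi_bound: "\<bar>mi q $ r $ k\<bar> \<le> 1 / (1 - \<delta>)"
proof -
  have "(1 - \<delta>) * norm (mi q *v axis k 1) \<le> 1"
    using Mm_lower[of "mi q *v axis k 1" q] by (simp add: Mm_mi_v)
  then have "norm (mi q *v axis k 1) \<le> 1 / (1 - \<delta>)"
    using d1 by (simp add: field_simps)
  moreover have "(mi q *v axis k 1) $ r = mi q $ r $ k"
    by (simp add: matrix_vector_mult_basis column_def)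
  ultimately show ?thesis using component_le_norm_cart[of "mi q *v axis k 1" r] by simp
qed

definition Psi :: "'n pt \<Rightarrow> 'n pt \<Rightarrow> 'n pt" where
  "Psi q v = Pp v + ey (mi q *v (Yp v - A' q (Pp v)))"

lemma bl_ey: "bounded_linear ey" using linear_ey linear_conv_bounded_linear by blast

lemma Phi_deriv: "(Phi has_derivative (\<lambda>v. v + ey (A' q v))) (at q)"
  unfolding Phi_def[abs_def]
  by (intro has_derivative_add has_derivative_ident bounded_linear.has_derivative[OF bl_ey a_has_deriv])

lemma Pp_Yp: "Pp v + ey (Yp v) = v" by (simp add: Pp_def ey_def Yp_def prod_eq_iff)

lemma Phi'_Psi: "(\<lambda>v. v + ey (A' q v)) \<circ> Psi q = id"
proof
  fix v
  let ?u = "mi q *v (Yp v - A' q (Pp v))"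
  have l: "linear (A' q)" by (rule A'_linear)
  have "Psi q v + ey (A' q (Psi q v)) = Pp v + ey ?u + ey (A' q (Pp v) + A' q (ey ?u))"
    by (simp add: Psi_def linear_add[OF l])
  also have "\<dots> = Pp v + ey (?u + A' q (ey ?u) + A' q (Pp v))"
    by (simp only: linear_add[OF linear_ey] add.assoc add.left_commute add.commute)
  also have "\<dots> = Pp v + ey (Mm q *v ?u + A' q (Pp v))"
    by (simp only: Mm_mul)
  also have "\<dots> = v" by (simp add: Mm_mi_v Pp_Yp)
  finally show "((\<lambda>v. v + ey (A' q v)) \<circ> Psi q) v = id v" by simp
qed

lemma G_deriv: "(G has_derivative Psi (G p)) (at p)"
proof -
  have "(G has_derivative Psi (G p)) (at (Phi (G p)))"
    by (rule has_derivative_inverse_on[where S=UNIV and f'="\<lambda>q v. v + ey (A' q v)"])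
       (auto simp: Phi_deriv G_Phi Phi'_Psi)
  then show ?thesis by (simp add: Phi_G)
qed

lemma ey_expand: "ey x = (\<Sum>r\<in>UNIV. x $ r *\<^sub>R ey (axis r 1))"
proof -
  have "ey x = ey (\<Sum>r\<in>UNIV. x $ r *\<^sub>R axis r 1)"
    using basis_expansion[of x] by (simp add: scalar_mult_eq_scaleR)
  also have "\<dots> = (\<Sum>r\<in>UNIV. x $ r *\<^sub>R ey (axis r 1))"
    by (simp add: linear_sum[OF linear_ey] linear_scale[OF linear_ey])
  finally show ?thesis .
qed

lemma chain_G:
  assumes "\<And>q. h differentiable (at q)"
  shows "((\<lambda>p. h (G p)) has_derivative
     (\<lambda>v. frechet_derivative h (at (G p)) (Pp v)
        + (\<Sum>r\<in>UNIV. (\<Sum>k\<in>UNIV. mi (G p) $ r $ k * (Yp v - A' (G p) (Pp v)) $ k)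
              * frechet_derivative h (at (G p)) (ey (axis r 1))))) (at p)"
proof -
  let ?D = "frechet_derivative h (at (G p))"
  have dh: "(h has_derivative ?D) (at (G p))" using assms frechet_derivative_works by blast
  have l: "linear ?D" using dh has_derivative_linear by blast
  have "((\<lambda>p. h (G p)) has_derivative (\<lambda>v. ?D (Psi (G p) v))) (at p)"
    using diff_chain_at[OF G_deriv dh] by (simp add: o_def)
  moreover have "?D (Psi (G p) v) = ?D (Pp v)
        + (\<Sum>r\<in>UNIV. (\<Sum>k\<in>UNIV. mi (G p) $ r $ k * (Yp v - A' (G p) (Pp v)) $ k) * ?D (ey (axis r 1)))" for v
  proof -
    let ?x = "mi (G p) *v (Yp v - A' (G p) (Pp v))"
    have "?D (Psi (G p) v) = ?D (Pp v) + ?D (ey ?x)"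
      by (simp add: Psi_def linear_add[OF l])
    also have "?D (ey ?x) = (\<Sum>r\<in>UNIV. ?x $ r * ?D (ey (axis r 1)))"
      by (subst ey_expand) (simp add: linear_sum[OF l] linear_scale[OF l])
    finally show ?thesis by (simp add: matrix_vector_mult_def)
  qed
  ultimately show ?thesis by simp
qed

end



lemma det_differentiable:
  fixes N :: "'a::real_normed_vector \<Rightarrow> real^'n::finite^'n"
  assumes "\<And>i j. (\<lambda>p. N p $ i $ j) differentiable (at x)"
  shows "(\<lambda>p. det (N p)) differentiable (at x)"
proof -
  have "(\<lambda>p. \<Sum>s\<in>{s. s permutes (UNIV::'n set)}. of_int (sign s) * (\<Prod>i\<in>UNIV. N p $ i $ s i)) differentiable (at x)"
  proof (intro differentiable_sum differentiable_mult differentiable_const ballI)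
    fix s :: "'n \<Rightarrow> 'n"
    have "((\<lambda>p. N p $ i $ s i) has_derivative (SOME D. ((\<lambda>p. N p $ i $ s i) has_derivative D) (at x))) (at x)" for i
      using someI_ex[OF assms[of i "s i", unfolded differentiable_def]] .
    from has_derivative_prod[where f="\<lambda>i p. N p $ i $ s i" and I=UNIV, OF this]
    show "(\<lambda>p. \<Prod>i\<in>UNIV. N p $ i $ s i) differentiable at x"
      unfolding differentiable_def by blast
  qed auto
  then show ?thesis unfolding det_def .
qed

context lem begin

definition Ne :: "'n pt \<Rightarrow> 'n \<Rightarrow> 'n \<Rightarrow> real" where "Ne p l k = Mm (G p) $ l $ k"
definition mm :: "'n pt \<Rightarrow> 'n \<Rightarrow> 'n \<Rightarrow> real" where "mm p i k = mi (G p) $ i $ k"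

abbreviation hh :: "'n pt list \<Rightarrow> 'n \<Rightarrow> 'n pt \<Rightarrow> real" where "hh vs j \<equiv> dd vs (\<lambda>q. a q $ j)"

lemma hh_diff: "set vs \<subseteq> Basis \<Longrightarrow> hh vs j differentiable (at q)"
  using a_smooth[of j] unfolding smooth_def by blast

lemma G_differentiable: "G differentiable (at p)"
  using G_deriv unfolding differentiable_def by blast

lemma hhG_diff: "set vs \<subseteq> Basis \<Longrightarrow> (\<lambda>p. hh vs j (G p)) differentiable (at p)"
proof -
  assume vs: "set vs \<subseteq> Basis"
  obtain D where "(hh vs j has_derivative D) (at (G p))" using hh_diff[OF vs] unfolding differentiable_def by blast
  from diff_chain_at[OF G_deriv this] show ?thesis unfolding differentiable_def o_def by blast
qed

lemma Mm_entry: "Mm q $ l $ k = (if l = k then 1 else 0) + hh [ey (axis k 1)] l q"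
  by (simp add: Mm_def mat_def matrix_def A'_comp)

lemma ey_axis_basis: "ey (axis k 1) \<in> Basis"
  by (rule ey_basis) (simp add: Basis_vec_def, blast)

lemma Ne_entry: "Ne p l k = (if l = k then 1 else 0) + hh [ey (axis k 1)] l (G p)"
  by (simp add: Ne_def Mm_entry)

lemma Ne_diff: "(\<lambda>p. Ne p l k) differentiable (at p)"
proof -
  have "(\<lambda>p. hh [ey (axis k 1)] l (G p)) differentiable (at p)" by (rule hhG_diff) (simp add: ey_axis_basis)
  then show ?thesis unfolding Ne_entry by (rule differentiable_add[OF differentiable_const])
qed

lemma det_Mm_nz: "det (Mm q) \<noteq> 0"
  using Mm_inv invertible_det_nz by blast

lemma mi_cramer: "mi q $ k $ i = det (\<chi> r c. if c = k then axis i 1 $ r else Mm q $ r $ c) / det (Mm q)"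
proof -
  have "Mm q *v (mi q *v axis i 1) = axis i 1" by (rule Mm_mi_v)
  then have "mi q *v axis i 1 = (\<chi> k. det (\<chi> r c. if c = k then axis i 1 $ r else Mm q $ r $ c) / det (Mm q))"
    using cramer[OF det_Mm_nz] by blast
  moreover have "(mi q *v axis i 1) $ k = mi q $ k $ i"
    by (simp add: matrix_vector_mult_basis column_def)
  ultimately show ?thesis by simp
qed

lemma mm_diff: "(\<lambda>p. mm p k i) differentiable (at p)"
proof -
  have e: "(\<lambda>p. mm p k i) = (\<lambda>p. det (\<chi> r c. if c = k then axis i 1 $ r else Ne p r c) / det (Mm (G p)))"
    unfolding mm_def mi_cramer Ne_def by (rule refl)
  have n: "det (Mm (G p)) \<noteq> 0"
    using det_Mm_nz[of "G p"] by simp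
  show ?thesis unfolding e
  proof (intro differentiable_divide det_differentiable n)
    fix r c
    show "(\<lambda>p. (\<chi> r c. if c = k then axis i 1 $ r else Ne p r c) $ r $ c) differentiable at p"
      by (cases "c = k") (simp_all add: Ne_diff)
    show "(\<lambda>p. Mm (G p) $ r $ c) differentiable at p"
      using Ne_diff by (simp add: Ne_def)
  qed
qed

end



context lem begin

lemma mm_Ne_id: "(\<Sum>l\<in>UNIV. mm p i l * Ne p l k) = (if i = k then 1 else 0)"
proof -
  have "(mi (G p) ** Mm (G p)) $ i $ k = (if i = k then 1 else 0)"
    by (simp add: Mm_mi mat_def)
  then show ?thesis by (simp add: matrix_matrix_mult_def mm_def Ne_def)
qed

lemma Ne_mm_id: "(\<Sum>k\<in>UNIV. Ne p l k * mm p k j) = (if l = j then 1 else 0)"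
proof -
  have "(Mm (G p) ** mi (G p)) $ l $ j = (if l = j then 1 else 0)"
    by (simp add: Mm_mi mat_def)
  then show ?thesis by (simp add: matrix_matrix_mult_def mm_def Ne_def)
qed

lemma mm_deriv:
  "frechet_derivative (\<lambda>p. mm p i j) (at p) v =
     - (\<Sum>l\<in>UNIV. \<Sum>k\<in>UNIV. mm p i l * frechet_derivative (\<lambda>p. Ne p l k) (at p) v * mm p k j)"
proof -
  define Dm where "Dm i l = frechet_derivative (\<lambda>p. mm p i l) (at p)" for i l
  define DN where "DN l k = frechet_derivative (\<lambda>p. Ne p l k) (at p)" for l k
  have hm: "((\<lambda>p. mm p i l) has_derivative Dm i l) (at p)" for i l
    unfolding Dm_def using mm_diff frechet_derivative_works by blast
  have hN: "((\<lambda>p. Ne p l k) has_derivative DN l k) (at p)" for l k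
    unfolding DN_def using Ne_diff frechet_derivative_works by blast
  have star: "(\<Sum>l\<in>UNIV. Dm i l v * Ne p l k) = - (\<Sum>l\<in>UNIV. mm p i l * DN l k v)" for k
  proof -
    have d1: "((\<lambda>p. \<Sum>l\<in>UNIV. mm p i l * Ne p l k) has_derivative
        (\<lambda>v. \<Sum>l\<in>UNIV. mm p i l * DN l k v + Dm i l v * Ne p l k)) (at p)"
      by (intro has_derivative_sum has_derivative_mult hm hN)
    have d2: "((\<lambda>p. \<Sum>l\<in>UNIV. mm p i l * Ne p l k) has_derivative (\<lambda>v. 0)) (at p)"
      unfolding mm_Ne_id by simp
    have "(\<lambda>v. \<Sum>l\<in>UNIV. mm p i l * DN l k v + Dm i l v * Ne p l k) = (\<lambda>v. 0)"
      using has_derivative_unique[OF d1 d2] .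
    from fun_cong[OF this, of v] show ?thesis
      by (simp add: sum.distrib eq_neg_iff_add_eq_0 add.commute)
  qed
  have "Dm i j v = (\<Sum>l\<in>UNIV. Dm i l v * (if l = j then 1 else 0))"
    by (simp add: if_distrib cong: if_cong)
  also have "\<dots> = (\<Sum>l\<in>UNIV. Dm i l v * (\<Sum>k\<in>UNIV. Ne p l k * mm p k j))"
    by (simp add: Ne_mm_id)
  also have "\<dots> = (\<Sum>k\<in>UNIV. (\<Sum>l\<in>UNIV. Dm i l v * Ne p l k) * mm p k j)"
    by (simp only: sum_distrib_left sum_distrib_right mult.assoc) (rule sum.swap)
  also have "\<dots> = (\<Sum>k\<in>UNIV. - (\<Sum>l\<in>UNIV. mm p i l * DN l k v) * mm p k j)"
    by (simp add: star)
  also have "\<dots> = - (\<Sum>k\<in>UNIV. \<Sum>l\<in>UNIV. mm p i l * DN l k v * mm p k j)"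
    by (simp add: sum_distrib_right sum_negf)
  also have "\<dots> = - (\<Sum>l\<in>UNIV. \<Sum>k\<in>UNIV. mm p i l * DN l k v * mm p k j)"
    by (subst sum.swap) (rule refl)
  finally show ?thesis by (simp add: Dm_def DN_def)
qed

end



definition cnt :: "'n::finite pt list \<Rightarrow> nat" where "cnt vs = length (filter (\<lambda>v. fst v = 0) vs)"

lemma cnt_Cons: "cnt (v # vs) = cnt [v] + cnt vs" by (simp add: cnt_def)

lemma cnt_ey0: "b \<noteq> 0 \<Longrightarrow> cnt [ey b :: 'n::finite pt] = 0"
  by (simp add: cnt_def ey_def zero_prod_def)

lemma cnt_ey: "cnt [ey (axis r 1) :: 'n::finite pt] = 0"
  by (rule cnt_ey0) (simp add: axis_eq_0_iff)

lemma fd_add: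
  assumes "f differentiable (at p)" "g differentiable (at p)"
  shows "frechet_derivative (\<lambda>p. f p + g p) (at p) v = frechet_derivative f (at p) v + frechet_derivative g (at p) v"
proof -
  have "((\<lambda>p. f p + g p) has_derivative (\<lambda>v. frechet_derivative f (at p) v + frechet_derivative g (at p) v)) (at p)"
    using assms frechet_derivative_works by (blast intro: has_derivative_add)
  from fun_cong[OF frechet_derivative_at[OF this], of v] show ?thesis by simp
qed

lemma fd_mult:
  fixes f g :: "'a::real_normed_vector \<Rightarrow> real"
  assumes "f differentiable (at p)" "g differentiable (at p)"
  shows "frechet_derivative (\<lambda>p. f p * g p) (at p) v = f p * frechet_derivative g (at p) v + frechet_derivative f (at p) v * g p"
proof -
  have "((\<lambda>p. f p * g p) has_derivative (\<lambda>v. f p * frechet_derivative g (at p) v + frechet_derivative f (at p) v * g p)) (at p)"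
    using assms frechet_derivative_works by (blast intro: has_derivative_mult)
  from fun_cong[OF frechet_derivative_at[OF this], of v] show ?thesis by simp
qed

lemma fd_const: "frechet_derivative (\<lambda>p. c) (at p) v = (0::real)"
proof -
  have "((\<lambda>p. c) has_derivative (\<lambda>v. 0)) (at p)" by simp
  from fun_cong[OF frechet_derivative_at[OF this], of v] show ?thesis by simp
qed

context lem begin

inductive_set Alg :: "(('n pt \<Rightarrow> real) \<times> nat) set" where
  gen: "set vs \<subseteq> Basis \<Longrightarrow> ((\<lambda>p. hh vs j (G p)), cnt vs) \<in> Alg"
| genm: "((\<lambda>p. mm p i k), 0) \<in> Alg"
| const: "((\<lambda>p. c), 0) \<in> Alg"
| zero: "((\<lambda>p. 0), n) \<in> Alg"
| add: "(f, k) \<in> Alg \<Longrightarrow> (g, k) \<in> Alg \<Longrightarrow> ((\<lambda>p. f p + g p), k) \<in> Alg"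
| mult: "(f, k) \<in> Alg \<Longrightarrow> (g, l) \<in> Alg \<Longrightarrow> ((\<lambda>p. f p * g p), k + l) \<in> Alg"
| weak: "(f, k) \<in> Alg \<Longrightarrow> l \<le> k \<Longrightarrow> (f, l) \<in> Alg"

lemma Alg_eqw: "(f, k) \<in> Alg \<Longrightarrow> k = l \<Longrightarrow> (f, l) \<in> Alg" by simp

lemma Alg_sum:
  assumes "finite I" "\<And>i. i \<in> I \<Longrightarrow> (f i, k) \<in> Alg"
  shows "((\<lambda>p. \<Sum>i\<in>I. f i p), k) \<in> Alg"
  using assms
proof (induction I rule: finite_induct)
  case empty then show ?case by (simp add: Alg.zero)
next
  case (insert x F)
  then have "((\<lambda>p. f x p + (\<Sum>i\<in>F. f i p)), k) \<in> Alg"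
    by (intro Alg.add) auto
  then show ?case using insert(1,2) by simp
qed

lemma Alg_prod:
  assumes "finite I" "\<And>i. i \<in> I \<Longrightarrow> (f i, 0) \<in> Alg"
  shows "((\<lambda>p. \<Prod>i\<in>I. f i p), 0) \<in> Alg"
  using assms
proof (induction I rule: finite_induct)
  case empty then show ?case by (simp add: Alg.const)
next
  case (insert x F)
  then have "((\<lambda>p. f x p * (\<Prod>i\<in>F. f i p)), 0 + 0) \<in> Alg"
    by (intro Alg.mult) auto
  then show ?case using insert(1,2) by simp
qed

lemma Alg_mult3: "(f, k) \<in> Alg \<Longrightarrow> (g, l) \<in> Alg \<Longrightarrow> (h, m) \<in> Alg \<Longrightarrow> k + l + m = n
   \<Longrightarrow> ((\<lambda>p. f p * g p * h p), n) \<in> Alg"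
  using Alg.mult[OF Alg.mult] by blast

lemma hh_linear: "set vs \<subseteq> Basis \<Longrightarrow> linear (frechet_derivative (hh vs j) (at q))"
  using hh_diff frechet_derivative_works has_derivative_linear by blast

lemma gen_deriv:
  assumes vs: "set vs \<subseteq> Basis" and v: "v \<in> Basis"
  shows "((\<lambda>p. frechet_derivative (\<lambda>p. hh vs j (G p)) (at p) v), cnt vs + cnt [v]) \<in> Alg"
proof -
  define T1 where "T1 p = frechet_derivative (hh vs j) (at (G p)) (Pp v)" for p
  define W where "W k p = (Yp v - A' (G p) (Pp v)) $ k" for k p
  have eq: "frechet_derivative (\<lambda>p. hh vs j (G p)) (at p) v =
      T1 p + (\<Sum>r\<in>UNIV. (\<Sum>k\<in>UNIV. mm p r k * W k p) * hh (ey (axis r 1) # vs) j (G p))" for p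
    using fun_cong[OF frechet_derivative_at[OF chain_G[where p=p, OF hh_diff[OF vs, of j]]], where x=v]
    by (simp only: T1_def W_def mm_def dd.simps(2))
  have T1: "(T1, cnt vs + cnt [v]) \<in> Alg" and W: "\<And>k. (W k, cnt [v]) \<in> Alg"
  proof -
    consider "Pp v = v" "Yp v = 0" | "Pp v = 0" "v = ey (Yp v)" "Yp v \<in> Basis"
      using basis_pt_cases[OF v] by blast
    then have "(T1, cnt vs + cnt [v]) \<in> Alg \<and> (\<forall>k. (W k, cnt [v]) \<in> Alg)"
    proof cases
      case 1
      have g1: "((\<lambda>p. hh (v # vs) j (G p)), cnt (v # vs)) \<in> Alg"
        by (rule Alg.gen) (use vs v in simp)
      have "T1 = (\<lambda>p. hh (v # vs) j (G p))" by (simp add: T1_def 1 fun_eq_iff)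
      then have t: "(T1, cnt vs + cnt [v]) \<in> Alg"
        using g1 cnt_Cons[of v vs] by (simp add: add.commute)
      have w: "W k = (\<lambda>p. (-1) * hh [v] k (G p))" for k by (simp add: W_def 1 A'_comp fun_eq_iff)
      have "((\<lambda>p. (-1) * hh [v] k (G p)), 0 + cnt [v]) \<in> Alg" for k
        by (rule Alg.mult[OF Alg.const Alg.gen]) (use v in simp)
      then have "(W k, cnt [v]) \<in> Alg" for k by (simp add: w)
      with t show ?thesis by blast
    next
      case 2
      have l0: "frechet_derivative (hh vs j) (at q) 0 = 0" for q
        using linear_0[OF hh_linear[OF vs]] .
      have t: "T1 = (\<lambda>p. 0)" by (simp add: T1_def 2(1) l0 fun_eq_iff)
      have w: "W k = (\<lambda>p. Yp v $ k)" for k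
        using linear_0[OF A'_linear] by (simp add: W_def 2(1) fun_eq_iff)
      have c: "cnt [v] = 0"
      proof -
        have "Yp v \<noteq> 0" using 2(3) nonzero_Basis by blast
        then show ?thesis using cnt_ey0 2(2) by metis
      qed
      show ?thesis unfolding t w c by (simp add: Alg.zero Alg.const)
    qed
    then show "(T1, cnt vs + cnt [v]) \<in> Alg" "\<And>k. (W k, cnt [v]) \<in> Alg" by auto
  qed
  have S: "((\<lambda>p. (\<Sum>k\<in>UNIV. mm p r k * W k p) * hh (ey (axis r 1) # vs) j (G p)), cnt vs + cnt [v]) \<in> Alg" for r
  proof -
    have h: "((\<lambda>p. hh (ey (axis r 1) # vs) j (G p)), cnt (ey (axis r 1) # vs)) \<in> Alg"
      by (rule Alg.gen) (use vs ey_axis_basis in simp)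
    have s: "((\<lambda>p. \<Sum>k\<in>UNIV. mm p r k * W k p), cnt [v]) \<in> Alg"
    proof (rule Alg_sum)
      fix k
      show "((\<lambda>p. mm p r k * W k p), cnt [v]) \<in> Alg"
        using Alg.mult[OF Alg.genm W[of k]] by simp
    qed simp
    have "((\<lambda>p. (\<Sum>k\<in>UNIV. mm p r k * W k p) * hh (ey (axis r 1) # vs) j (G p)), cnt [v] + cnt (ey (axis r 1) # vs)) \<in> Alg"
      by (rule Alg.mult[OF s h])
    then show ?thesis by (simp add: cnt_Cons[of "ey (axis r 1)"] cnt_ey add.commute)
  qed
  have "((\<lambda>p. T1 p + (\<Sum>r\<in>UNIV. (\<Sum>k\<in>UNIV. mm p r k * W k p) * hh (ey (axis r 1) # vs) j (G p))), cnt vs + cnt [v]) \<in> Alg"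
  proof (rule Alg.add[OF T1], rule Alg_sum)
    fix r :: 'n
    show "((\<lambda>p. (\<Sum>k\<in>UNIV. mm p r k * W k p) * hh (ey (axis r 1) # vs) j (G p)), cnt vs + cnt [v]) \<in> Alg"
      by (rule S)
  qed simp
  then show ?thesis by (simp add: eq)
qed

end



context lem begin

lemma Ne_deriv_Alg:
  assumes v: "v \<in> Basis"
  shows "((\<lambda>p. frechet_derivative (\<lambda>p. Ne p l r) (at p) v), cnt [v]) \<in> Alg"
proof -
  have e: "(\<lambda>p. Ne p l r) = (\<lambda>p. (if l = r then 1 else 0) + hh [ey (axis r 1)] l (G p))"
    by (simp add: Ne_entry fun_eq_iff)
  have d: "(\<lambda>p. hh [ey (axis r 1)] l (G p)) differentiable (at p)" for p
    by (rule hhG_diff) (simp add: ey_axis_basis)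
  have "frechet_derivative (\<lambda>p. Ne p l r) (at p) v = frechet_derivative (\<lambda>p. hh [ey (axis r 1)] l (G p)) (at p) v" for p
    unfolding e fd_add[OF differentiable_const d] fd_const by simp
  moreover have "((\<lambda>p. frechet_derivative (\<lambda>p. hh [ey (axis r 1)] l (G p)) (at p) v), cnt [ey (axis r 1)] + cnt [v]) \<in> Alg"
    by (rule gen_deriv[OF _ v]) (simp add: ey_axis_basis)
  ultimately show ?thesis by (simp add: cnt_ey)
qed

lemma Alg_inv:
  assumes "(f, k) \<in> Alg"
  shows "(\<forall>p. f differentiable (at p)) \<and> (\<forall>v\<in>Basis. ((\<lambda>p. frechet_derivative f (at p) v), k + cnt [v]) \<in> Alg)"
  using assms
proof (induction rule: Alg.induct)
  case (gen vs j)
  then show ?case using hhG_diff gen_deriv by blast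
next
  case (genm i k)
  have "((\<lambda>p. frechet_derivative (\<lambda>p. mm p i k) (at p) v), 0 + cnt [v]) \<in> Alg" if v: "v \<in> Basis" for v
  proof -
    have s: "((\<lambda>p. \<Sum>l\<in>UNIV. \<Sum>r\<in>UNIV. mm p i l * frechet_derivative (\<lambda>p. Ne p l r) (at p) v * mm p r k), cnt [v]) \<in> Alg"
    proof (rule Alg_sum, simp, rule Alg_sum, simp)
      fix l r
      show "((\<lambda>p. mm p i l * frechet_derivative (\<lambda>p. Ne p l r) (at p) v * mm p r k), cnt [v]) \<in> Alg"
        by (rule Alg_mult3[OF Alg.genm Ne_deriv_Alg[OF v] Alg.genm]) simp
    qed
    have "((\<lambda>p. (-1) * (\<Sum>l\<in>UNIV. \<Sum>r\<in>UNIV. mm p i l * frechet_derivative (\<lambda>p. Ne p l r) (at p) v * mm p r k)), 0 + cnt [v]) \<in> Alg"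
      by (rule Alg.mult[OF Alg.const s])
    then show ?thesis by (simp add: mm_deriv)
  qed
  then show ?case using mm_diff by simp
next
  case (const c)
  then show ?case by (simp add: fd_const Alg.zero)
next
  case (zero n)
  then show ?case by (simp add: fd_const Alg.zero)
next
  case (add f k g)
  have "((\<lambda>p. frechet_derivative f (at p) v + frechet_derivative g (at p) v), k + cnt [v]) \<in> Alg" if "v \<in> Basis" for v
    using add.IH that by (intro Alg.add) auto
  moreover have df: "\<forall>p. f differentiable (at p)" "\<forall>p. g differentiable (at p)" using add.IH by blast+
  moreover have "(\<lambda>p. frechet_derivative (\<lambda>p. f p + g p) (at p) v) = (\<lambda>p. frechet_derivative f (at p) v + frechet_derivative g (at p) v)" for v
    using df by (intro ext fd_add) auto
  ultimately show ?case by (simp add: differentiable_add)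
next
  case (mult f k g l)
  have "((\<lambda>p. f p * frechet_derivative g (at p) v + frechet_derivative f (at p) v * g p), k + l + cnt [v]) \<in> Alg"
    if v: "v \<in> Basis" for v
  proof (rule Alg.add)
    have "((\<lambda>p. f p * frechet_derivative g (at p) v), k + (l + cnt [v])) \<in> Alg"
      using mult v by (intro Alg.mult) auto
    then show "((\<lambda>p. f p * frechet_derivative g (at p) v), k + l + cnt [v]) \<in> Alg" by (simp add: add.assoc)
    have "((\<lambda>p. frechet_derivative f (at p) v * g p), k + cnt [v] + l) \<in> Alg"
      using mult v by (intro Alg.mult) auto
    then show "((\<lambda>p. frechet_derivative f (at p) v * g p), k + l + cnt [v]) \<in> Alg" by (simp add: add_ac)
  qed
  moreover have df: "\<forall>p. f differentiable (at p)" "\<forall>p. g differentiable (at p)" using mult.IH by blast+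
  moreover have "(\<lambda>p. frechet_derivative (\<lambda>p. f p * g p) (at p) v) = (\<lambda>p. f p * frechet_derivative g (at p) v + frechet_derivative f (at p) v * g p)" for v
    using df by (intro ext fd_mult) auto
  ultimately show ?case by (simp add: differentiable_mult)
next
  case (weak f k l)
  then show ?case by (auto intro: Alg.weak)
qed

lemma Alg_dd:
  assumes "(f, k) \<in> Alg" "set vs \<subseteq> Basis"
  shows "(dd vs f, k + cnt vs) \<in> Alg"
  using assms(2)
proof (induction vs)
  case Nil then show ?case using assms(1) by (simp add: cnt_def)
next
  case (Cons v vs)
  then have "(dd vs f, k + cnt vs) \<in> Alg" "v \<in> Basis" by auto
  from Alg_inv[OF this(1)] this(2)
  have "((\<lambda>p. frechet_derivative (dd vs f) (at p) v), k + cnt vs + cnt [v]) \<in> Alg" by blast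
  then show ?case by (simp add: cnt_Cons[of v vs] add_ac)
qed

lemma Alg_smooth: "(f, k) \<in> Alg \<Longrightarrow> smooth f"
  unfolding smooth_def using Alg_dd Alg_inv by blast

end



context lem begin

lemma Alg_est:
  fixes S :: "'n pt set" and w :: "'n pt \<Rightarrow> real"
  assumes w0: "\<And>p. 0 \<le> w p" and w1: "\<And>p. w p \<le> 1"
    and SG: "\<And>p. p \<in> S \<Longrightarrow> G p \<in> S \<and> w (G p) = w p"
    and hyp: "\<And>j vs. set vs \<subseteq> Basis \<Longrightarrow> \<exists>C. \<forall>p\<in>S. \<bar>hh vs j p\<bar> \<le> C * w p ^ cnt vs"
    and mem: "(f, k) \<in> Alg"
  shows "\<exists>C\<ge>0. \<forall>p\<in>S. \<bar>f p\<bar> \<le> C * w p ^ k"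
  using mem
proof (induction rule: Alg.induct)
  case (gen vs j)
  obtain C where C: "\<forall>q\<in>S. \<bar>hh vs j q\<bar> \<le> C * w q ^ cnt vs" using hyp[OF gen] by blast
  have "\<forall>p\<in>S. \<bar>hh vs j (G p)\<bar> \<le> max C 0 * w p ^ cnt vs"
  proof
    fix p assume "p \<in> S"
    then have "\<bar>hh vs j (G p)\<bar> \<le> C * w p ^ cnt vs" using C SG by metis
    also have "\<dots> \<le> max C 0 * w p ^ cnt vs" using w0 by (intro mult_right_mono) auto
    finally show "\<bar>hh vs j (G p)\<bar> \<le> max C 0 * w p ^ cnt vs" .
  qed
  then show ?case by (intro exI[of _ "max C 0"]) auto
next
  case (genm i k)
  have b: "\<bar>mm p i k\<bar> \<le> 1 / (1 - \<delta>)" for p unfolding mm_def by (rule mi_bound)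
  have c: "0 \<le> 1 / (1 - \<delta>)" using d1 by simp
  have "\<forall>p\<in>S. \<bar>mm p i k\<bar> \<le> 1 / (1 - \<delta>) * w p ^ 0"
    by (simp only: power_0 mult_1_right) (blast intro: b)
  with c show ?case by blast
next
  case (const c)
  then show ?case by (intro exI[of _ "\<bar>c\<bar>"]) auto
next
  case (zero n)
  then show ?case by (intro exI[of _ 0]) auto
next
  case (add f k g)
  then obtain C1 C2 where "C1 \<ge> 0" "\<forall>p\<in>S. \<bar>f p\<bar> \<le> C1 * w p ^ k" "C2 \<ge> 0" "\<forall>p\<in>S. \<bar>g p\<bar> \<le> C2 * w p ^ k"
    by blast
  then have "\<forall>p\<in>S. \<bar>f p + g p\<bar> \<le> (C1 + C2) * w p ^ k"
    by (auto simp: distrib_right intro: order_trans[OF abs_triangle_ineq] add_mono)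
  then show ?case using \<open>C1 \<ge> 0\<close> \<open>C2 \<ge> 0\<close> by (intro exI[of _ "C1 + C2"]) auto
next
  case (mult f k g l)
  then obtain C1 C2 where c: "C1 \<ge> 0" "\<forall>p\<in>S. \<bar>f p\<bar> \<le> C1 * w p ^ k" "C2 \<ge> 0" "\<forall>p\<in>S. \<bar>g p\<bar> \<le> C2 * w p ^ l"
    by blast
  have "\<forall>p\<in>S. \<bar>f p * g p\<bar> \<le> (C1 * C2) * w p ^ (k + l)"
  proof
    fix p assume p: "p \<in> S"
    have "\<bar>f p * g p\<bar> = \<bar>f p\<bar> * \<bar>g p\<bar>" by (simp add: abs_mult)
    also have "\<dots> \<le> (C1 * w p ^ k) * (C2 * w p ^ l)"
      using c p w0 by (intro mult_mono) auto
    also have "\<dots> = (C1 * C2) * w p ^ (k + l)" by (simp add: power_add)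
    finally show "\<bar>f p * g p\<bar> \<le> (C1 * C2) * w p ^ (k + l)" .
  qed
  then show ?case using c by (intro exI[of _ "C1 * C2"]) auto
next
  case (weak f k l)
  then obtain C where c: "C \<ge> 0" "\<forall>p\<in>S. \<bar>f p\<bar> \<le> C * w p ^ k" by blast
  have "\<forall>p\<in>S. \<bar>f p\<bar> \<le> C * w p ^ l"
  proof
    fix p assume p: "p \<in> S"
    have "w p ^ k \<le> w p ^ l" using power_decreasing[OF weak(2) w0 w1] .
    then show "\<bar>f p\<bar> \<le> C * w p ^ l" using c p by (meson mult_left_mono order_trans)
  qed
  then show ?case using c by blast
qed

lemma Alg_BC: assumes "(f, 0) \<in> Alg" shows "BC_inf f"
  unfolding BC_inf_def
proof (intro allI impI)
  fix vs :: "'n pt list" assume vs: "set vs \<subseteq> Basis"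
  have m: "(dd vs f, 0 + cnt vs) \<in> Alg" by (rule Alg_dd[OF assms vs])
  then have D: "\<forall>x. dd vs f differentiable at x" using Alg_inv by blast
  have "\<exists>C\<ge>0. \<forall>p\<in>UNIV. \<bar>dd vs f p\<bar> \<le> C * (\<lambda>_. 1::real) p ^ (0 + cnt vs)"
  proof (rule Alg_est[OF _ _ _ _ m])
    fix j and us :: "'n pt list" assume us: "set us \<subseteq> Basis"
    have "bounded (range (hh us j))" using bc[of j] us unfolding BC_inf_def by blast
    then obtain C where "\<forall>x\<in>range (hh us j). norm x \<le> C" unfolding bounded_iff by blast
    then show "\<exists>C. \<forall>p\<in>UNIV. \<bar>hh us j p\<bar> \<le> C * (\<lambda>_. 1::real) p ^ cnt us" by auto
  qed auto
  then obtain C where "\<forall>p. \<bar>dd vs f p\<bar> \<le> C" by auto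
  then have "bounded (range (dd vs f))" unfolding bounded_iff by auto
  with D show "(\<forall>x. dd vs f differentiable at x) \<and> bounded (range (dd vs f))" by blast
qed

lemma jbr_ge1: "1 \<le> jbr x" by (simp add: jbr_def)

lemma Alg_symb:
  assumes "(f, 0) \<in> Alg" and sa: "\<And>j. symbol_est \<epsilon> (\<lambda>p. a p $ j)"
  shows "symbol_est \<epsilon> f"
  unfolding symbol_est_def
proof (intro allI impI)
  fix vs :: "'n pt list" assume vs: "set vs \<subseteq> Basis"
  define w :: "'n pt \<Rightarrow> real" where "w p = 1 / jbr (fst (snd p))" for p
  have w0: "0 \<le> w p" for p using jbr_ge1[of "fst (snd p)"] by (simp add: w_def)
  have w1: "w p \<le> 1" for p using jbr_ge1[of "fst (snd p)"] by (simp add: w_def)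
  have m: "(dd vs f, 0 + cnt vs) \<in> Alg" by (rule Alg_dd[OF assms(1) vs])
  have "\<exists>C\<ge>0. \<forall>p\<in>Mset \<epsilon>. \<bar>dd vs f p\<bar> \<le> C * w p ^ (0 + cnt vs)"
  proof (rule Alg_est[OF w0 w1 _ _ m])
    fix p :: "'n pt" assume "p \<in> Mset \<epsilon>"
    then show "G p \<in> Mset \<epsilon> \<and> w (G p) = w p" by (simp add: Mset_def w_def G_snd)
  next
    fix j and us :: "'n pt list" assume us: "set us \<subseteq> Basis"
    obtain C where C: "\<forall>p\<in>Mset \<epsilon>. \<bar>hh us j p\<bar> \<le> C / jbr (fst (snd p)) ^ length (filter (\<lambda>v. fst v = 0) us)"
      using sa[of j] us unfolding symbol_est_def by blast
    then show "\<exists>C. \<forall>p\<in>Mset \<epsilon>. \<bar>hh us j p\<bar> \<le> C * w p ^ cnt us"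
      by (intro exI[of _ C]) (simp add: w_def cnt_def power_one_over divide_inverse power_inverse)
  qed
  then obtain C where "\<forall>p\<in>Mset \<epsilon>. \<bar>dd vs f p\<bar> \<le> C * w p ^ cnt vs" by auto
  then show "\<exists>C. \<forall>p\<in>Mset \<epsilon>. \<bar>dd vs f p\<bar> \<le> C / jbr (fst (snd p)) ^ length (filter (\<lambda>v. fst v = 0) vs)"
    by (intro exI[of _ C]) (simp add: w_def cnt_def power_one_over divide_inverse power_inverse)
qed

end



context lem begin

lemma rf_Alg: "((\<lambda>p. (gmap a p - snd (fst p)) $ j), 0) \<in> Alg"
proof -
  have e: "(\<lambda>p. (gmap a p - snd (fst p)) $ j) = (\<lambda>p. (-1) * hh [] j (G p))"
  proof
    fix p
    have "gmap a p - snd (fst p) = - a (G p)" using Yp_G_add[of p] by (simp add: Yp_def algebra_simps)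
    then show "(gmap a p - snd (fst p)) $ j = (-1) * hh [] j (G p)" by simp
  qed
  have m: "((\<lambda>p. (-1) * hh [] j (G p)), 0 + cnt ([]::'n pt list)) \<in> Alg"
    by (rule Alg.mult[OF Alg.const[of "-1"] Alg.gen[of "[]" j]]) simp
  have c: "0 + cnt ([]::'n pt list) = 0" by (simp add: cnt_def)
  show ?thesis by (subst e) (rule m[unfolded c])
qed

lemma Yp_Psi_ey: "Yp (Psi q (ey u)) = mi q *v u"
proof -
  have "Pp (ey u) = 0" by (simp add: Pp_def ey_def zero_prod_def)
  moreover have "Yp (ey u) = u" by (simp add: Yp_def ey_def)
  moreover have "A' q 0 = 0" using linear_0[OF A'_linear] .
  moreover have "Yp (0 + ey x) = x" for x :: "real^'n" by (simp add: Yp_def ey_def)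
  ultimately show ?thesis by (simp add: Psi_def)
qed

lemma Dmap_eq: "Dmap a p = det (mi (G p))"
proof -
  have f: "(\<lambda>z. gmap a ((fst (fst p), z), snd p)) = (\<lambda>z. Yp (G (emb p z)))"
    by (rule ext, simp only: G_def Yp_emb) (simp add: emb_def)
  have "((\<lambda>z. Yp (G (emb p z))) has_derivative (\<lambda>u. Yp (Psi (G p) (ey u)))) (at (Yp p))"
  proof -
    have g: "(G has_derivative Psi (G p)) (at (emb p (Yp p)))" using G_deriv[of p] by (simp add: emb_self)
    have "((G \<circ> emb p) has_derivative (Psi (G p) \<circ> ey)) (at (Yp p))" by (rule diff_chain_at[OF emb_deriv g])
    then have "((\<lambda>z. G (emb p z)) has_derivative (\<lambda>u. Psi (G p) (ey u))) (at (Yp p))"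
      by (simp add: o_def)
    from diff_chain_at[OF this Yp_deriv] show ?thesis by (simp add: o_def)
  qed
  then have "frechet_derivative (\<lambda>z. Yp (G (emb p z))) (at (Yp p)) = (\<lambda>u. mi (G p) *v u)"
    using frechet_derivative_at by (metis (no_types) Yp_Psi_ey)
  then show ?thesis unfolding Dmap_def jacobian_def f by (simp add: Yp_def)
qed

lemma Dmap_Alg: "(Dmap a, 0) \<in> Alg"
proof -
  have e: "Dmap a = (\<lambda>p. \<Sum>s\<in>{s. s permutes (UNIV::'n set)}. of_int (sign s) * (\<Prod>i\<in>UNIV. mm p i (s i)))"
    by (simp add: fun_eq_iff Dmap_eq det_def mm_def)
  have "((\<lambda>p. \<Sum>s\<in>{s. s permutes (UNIV::'n set)}. of_int (sign s) * (\<Prod>i\<in>UNIV. mm p i (s i))), 0) \<in> Alg"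
  proof (rule Alg_sum)
    show "finite {s. s permutes (UNIV::'n set)}" by (simp add: finite_permutations)
    fix s
    have "((\<lambda>p. of_int (sign s) * (\<Prod>i\<in>UNIV. mm p i (s i))), 0 + 0) \<in> Alg"
      by (rule Alg.mult[OF Alg.const Alg_prod]) (auto intro: Alg.genm)
    then show "((\<lambda>p. of_int (sign s) * (\<Prod>i\<in>UNIV. mm p i (s i))), 0) \<in> Alg" by simp
  qed
  then show ?thesis unfolding e .
qed

lemma smooth_comp: "b \<in> (Basis :: (real^'n) set) \<Longrightarrow> smooth h \<Longrightarrow> (\<And>q. h q = r q \<bullet> b) \<Longrightarrow>
   smooth (\<lambda>y. (y + r (emb p y)) \<bullet> b)"
proof -
  assume b: "b \<in> Basis" and h: "smooth h" and hr: "\<And>q. h q = r q \<bullet> b"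
  have "(\<lambda>y. (y + r (emb p y)) \<bullet> b) = (\<lambda>y. y \<bullet> b + h (emb p y))"
    by (simp add: inner_add_left hr)
  then show ?thesis using smooth_add[OF smooth_lin smooth_emb[OF h]] by simp
qed

lemma basis_cart: "b \<in> (Basis :: (real^'n) set) \<Longrightarrow> \<exists>i. b = axis i 1"
  by (auto simp: Basis_vec_def)

lemma diffeo_part: "diffeo (\<lambda>y. y + a ((x, y), (\<xi>, \<eta>)))"
proof -
  define p :: "'n pt" where "p = ((x, 0), (\<xi>, \<eta>))"
  have f: "(\<lambda>y. y + a ((x, y), (\<xi>, \<eta>))) = fsl p" by (simp add: fsl_fun p_def emb_def)
  have inv: "inv (fsl p) = (\<lambda>z. z + (gmap a (emb p z) - Yp (emb p z)))"
  proof
    fix z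
    have "gmap a (emb p z) = inv (fsl p) z" by (simp add: gmap_eq fsl_emb Yp_emb)
    then show "inv (fsl p) z = z + (gmap a (emb p z) - Yp (emb p z))" by (simp add: Yp_emb)
  qed
  have s1: "smooth_map (fsl p)"
  proof (rule smooth_mapI)
    fix b :: "real^'n" assume b: "b \<in> Basis"
    then obtain i where i: "b = axis i 1" using basis_cart by blast
    show "smooth (\<lambda>y. fsl p y \<bullet> b)" unfolding fsl_fun
      by (rule smooth_comp[OF b a_smooth[of i]]) (simp add: i cart_eq_inner_axis)
  qed
  have s2: "smooth_map (inv (fsl p))"
  proof (rule smooth_mapI)
    fix b :: "real^'n" assume b: "b \<in> Basis"
    then obtain i where i: "b = axis i 1" using basis_cart by blast
    show "smooth (\<lambda>y. inv (fsl p) y \<bullet> b)" unfolding inv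
      by (rule smooth_comp[OF b Alg_smooth[OF rf_Alg[of i]]]) (simp add: i cart_eq_inner_axis Yp_def)
  qed
  show ?thesis unfolding f diffeo_def using fsl_bij s1 s2 by blast
qed

end

theorem lemma1p6:
  fixes a :: "'n::finite pt \<Rightarrow> real^'n" and \<delta> :: real
  assumes bc: "\<And>j. BC_inf (\<lambda>p. a p $ j)"
    and \<delta>: "0 \<le> \<delta>" "\<delta> < 1"
    and grad: "\<And>x y \<xi> \<eta>. onorm (frechet_derivative (\<lambda>y'. a ((x, y'), (\<xi>, \<eta>))) (at y)) \<le> \<delta>"
  shows "(\<forall>x \<xi> \<eta>. diffeo (\<lambda>y. y + a ((x, y), (\<xi>, \<eta>))))
    \<and> (\<forall>j. BC_inf (\<lambda>p. (gmap a p - snd (fst p)) $ j))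
    \<and> BC_inf (Dmap a)
    \<and> (\<forall>\<epsilon>>0. (\<forall>j. symbol_est \<epsilon> (\<lambda>p. a p $ j)) \<longrightarrow>
          (\<forall>j. symbol_est \<epsilon> (\<lambda>p. (gmap a p - snd (fst p)) $ j)) \<and> symbol_est \<epsilon> (Dmap a))"
proof -
  interpret lem a \<delta> using assms by unfold_locales auto
  show ?thesis
    using diffeo_part Alg_BC[OF rf_Alg] Alg_BC[OF Dmap_Alg] Alg_symb[OF rf_Alg] Alg_symb[OF Dmap_Alg]
    by blast
qed



end
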